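(* Let $\alpha>2$ with $\alpha\notin\mathbb N$ and $\lfloor\alpha\rfloor$ even. Let $K_\alpha=\{\exp(2\ell\pi i/\alpha): \ell\in\mathbb Z,\ -\alpha/2<\ell\le \alpha/2\}$. Then for all $\lambda\in[\tfrac12,1]$ and $k\in\mathbb N$, \[ \sum_{\omega\in K_\alpha}(1+\lambda\omega)^{\alpha k}\le \alpha(1+\lambda)^{\alpha k}, \] where the (real-valued) left-hand side uses the principal branch $z^{\alpha k}=\exp(\alpha k\operatorname{Log} z)$. *)

theory Defs
  imports "HOL-Analysis.Analysis"
begin

definition K_set :: "real \<Rightarrow> complex set" where
  "K_set a = {exp (2 * of_int l * of_real pi * \<i> / of_real a) | l :: int.
                 - a / 2 < real_of_int l \<and> real_of_int l \<le> a / 2}"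

end

theory Submission
  imports Defs
begin

lemma norm_sq_aux:
  fixes lam t :: real
  shows "(cmod (1 + of_real lam * cis t))^2 = 1 + lam^2 + 2*lam*cos t"
proof -
  have "1 + of_real lam * cis t = Complex (1 + lam * cos t) (lam * sin t)"
    by (simp add: complex_eq_iff)
  hence "(cmod (1 + of_real lam * cis t))^2 = (1 + lam * cos t)^2 + (lam * sin t)^2"
    by (simp add: cmod_def)
  also have "\<dots> = 1 + lam^2 * (sin t ^2 + cos t^2) + 2*lam*cos t"
    by algebra
  finally show ?thesis by (simp add: sin_cos_squared_add)
qed

lemma cnj_aux:
  fixes lam t r :: real
  assumes "0 \<le> lam" "lam \<le> 1"
  shows "cnj ((1 + of_real lam * cis t) powr of_real r) = (1 + of_real lam * cis (-t)) powr of_real r"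
proof -
  have "Re (1 + of_real lam * cis t) \<ge> 0"
  proof -
    have "cos t \<ge> -1" by simp
    hence "lam * cos t \<ge> -1" using assms
      by (smt (verit) mult_left_mono mult_minus_right mult_cancel_left1)
    thus ?thesis by simp
  qed
  hence "cnj ((1 + of_real lam * cis t) powr of_real r) = cnj (1 + of_real lam * cis t) powr cnj (of_real r)"
    by (intro cnj_powr) auto
  also have "cnj (1 + of_real lam * cis t) = 1 + of_real lam * cis (-t)"
    by (simp add: complex_eq_iff)
  finally show ?thesis by simp
qed

lemma omega_cis: "exp (2 * of_int l * of_real pi * \<i> / of_real a) = cis (2 * real_of_int l * pi / a)"
  by (simp add: cis_conv_exp mult.commute mult.left_commute)

theorem lemma6p1:
  fixes a lam :: real and k :: nat
  assumes "a > 2" and "a \<notin> \<nat>" and "even \<lfloor>a\<rfloor>"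
    and "1/2 \<le> lam" and "lam \<le> 1" and "k \<ge> 1"
  shows "Im (\<Sum>\<omega>\<in>K_set a. (1 + of_real lam * \<omega>) powr of_real (a * real k)) = 0
       \<and> Re (\<Sum>\<omega>\<in>K_set a. (1 + of_real lam * \<omega>) powr of_real (a * real k))
           \<le> a * (1 + lam) powr (a * real k)"
proof -
  define r where "r = a * real k"
  define F where "F = (\<lambda>\<omega>::complex. (1 + of_real lam * \<omega>) powr of_real r)"
  define th where "th = (\<lambda>l::int. 2 * real_of_int l * pi / a)"
  obtain m where m: "\<lfloor>a\<rfloor> = 2 * m" using assms(3) by blast
  have fl: "of_int \<lfloor>a\<rfloor> \<le> a" "a < of_int \<lfloor>a\<rfloor> + 1" by linarith+
  have ne: "a \<noteq> of_int \<lfloor>a\<rfloor>"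
  proof
    assume "a = of_int \<lfloor>a\<rfloor>"
    moreover have "\<lfloor>a\<rfloor> \<ge> 0" using assms(1) by linarith
    ultimately have "a = real (nat \<lfloor>a\<rfloor>)" by simp
    thus False using assms(2) by (metis of_nat_in_Nats)
  qed
  have m1: "m \<ge> 1" using m assms(1) fl by linarith
  have am1: "2*m < a" "a < 2*m+1" using fl ne m by auto
  have K: "K_set a = (\<lambda>l. cis (th l)) ` {-m..m}"
  proof -
    have "\<And>l::int. (- a / 2 < real_of_int l \<and> real_of_int l \<le> a / 2) \<longleftrightarrow> l \<in> {-m..m}"
    proof -
      fix l :: int
      show "(- a / 2 < real_of_int l \<and> real_of_int l \<le> a / 2) \<longleftrightarrow> l \<in> {-m..m}"
      proof
        assume "- a / 2 < real_of_int l \<and> real_of_int l \<le> a / 2"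
        hence "real_of_int (2*l) < 2*m+1" "real_of_int (-2*l) < 2*m + 1" using am1 by auto
        hence "2*l < 2*m+1" "-2*l < 2*m+1" by linarith+
        thus "l \<in> {-m..m}" by auto
      next
        assume "l \<in> {-m..m}"
        hence "real_of_int l \<le> m" "real_of_int l \<ge> - m" by auto
        thus "- a / 2 < real_of_int l \<and> real_of_int l \<le> a / 2" using am1 by auto
      qed
    qed
    thus ?thesis unfolding K_set_def th_def omega_cis by blast
  qed
  have fin: "finite (K_set a)" unfolding K by simp
  have cK: "cnj ` K_set a = K_set a"
  proof -
    have "cnj ` K_set a = (\<lambda>l. cis (th (-l))) ` {-m..m}"
      unfolding K image_image th_def by (intro image_cong) (auto simp: complex_eq_iff)
    also have "\<dots> = (\<lambda>l. cis (th l)) ` (uminus ` {-m..m})"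
      by (simp only: image_image)
    also have "uminus ` {-m..m} = {-m..m}" by force
    finally show ?thesis using K by simp
  qed
  have "cnj (sum F (K_set a)) = sum (\<lambda>\<omega>. cnj (F \<omega>)) (K_set a)" by simp
  also have "\<dots> = sum (\<lambda>\<omega>. F (cnj \<omega>)) (K_set a)"
  proof (rule sum.cong)
    fix \<omega> assume "\<omega> \<in> K_set a"
    then obtain l where w: "\<omega> = cis (th l)" using K by auto
    have "cnj (cis (th l)) = cis (- th l)" by (simp add: complex_eq_iff)
    thus "cnj (F \<omega>) = F (cnj \<omega>)"
      unfolding F_def w using cnj_aux[of lam "th l" r] assms by simp
  qed simp
  also have "\<dots> = sum F (cnj ` K_set a)"
    by (subst sum.reindex) (auto intro: inj_onI)
  also have "\<dots> = sum F (K_set a)" using cK by simp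
  finally have "cnj (sum F (K_set a)) = sum F (K_set a)" .
  hence imz: "Im (sum F (K_set a)) = 0" by (metis Reals_cnj_iff complex_is_Real_iff)
  have r2: "r \<ge> a" "r > 2" using assms(1,6) unfolding r_def
    by (auto simp: mult_le_cancel_left1 intro: order.strict_trans2[of _ a])
  define B where "B = (1 + lam) powr r"
  have Bpos: "B > 0" unfolding B_def using assms by simp
  define g where "g = (\<lambda>l::int. cmod (F (cis (th l))))"
  have normF: "cmod (F \<omega>) = cmod (1 + of_real lam * \<omega>) powr r" for \<omega>
    unfolding F_def by (simp add: norm_powr_real_powr')
  have gB: "g l \<le> B" for l
  proof -
    have "cmod (1 + of_real lam * cis (th l)) \<le> 1 + lam"
      using norm_triangle_ineq[of 1 "of_real lam * cis (th l)"] assms by (simp add: norm_mult)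
    thus ?thesis unfolding g_def normF B_def using r2 by (intro powr_mono2) auto
  qed
  have gm: "g l \<le> B / 2" if "l = m \<or> l = -m" for l
  proof -
    have "cos (th l) = cos (2 * real_of_int m * pi / a)"
      using that unfolding th_def by auto
    also have "\<dots> \<le> cos (2 * pi / 3)"
    proof (subst cos_mono_le_eq)
      have "a \<le> 3 * m" using am1 m1 by linarith
      hence "2 * pi / 3 \<le> 2 * m * pi / a" using am1 assms(1)
        by (simp add: field_simps)
      moreover have "2 * m * pi / a \<le> pi" using am1 assms(1) by (simp add: field_simps)
      moreover have "0 \<le> 2 * real_of_int m * pi / a" using m1 assms(1) by simp
      ultimately show "0 \<le> 2 * real_of_int m * pi / a" "2 * real_of_int m * pi / a \<le> pi"
        "0 \<le> 2 * pi / 3" "2 * pi / 3 \<le> pi" "2 * pi / 3 \<le> 2 * real_of_int m * pi / a"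
        by auto
    qed
    finally have c: "cos (th l) \<le> -1/2" by (simp add: cos_120)
    define n where "n = cmod (1 + of_real lam * cis (th l))"
    have "n^2 = 1 + lam^2 + 2*lam*cos (th l)" unfolding n_def by (rule norm_sq_aux)
    also have "\<dots> \<le> 1 + lam^2 - lam" proof -
      have "lam * cos (th l) \<le> lam * (-1/2)" using c assms by (intro mult_left_mono) auto
      thus ?thesis by simp
    qed
    also have "\<dots> \<le> ((1+lam)/sqrt 2)^2" proof -
      have h: "lam*lam \<le> lam" using assms mult_left_le[of lam lam] by simp
      show ?thesis apply (simp add: power_divide power2_eq_square field_simps)
        using h assms by linarith
    qed
    finally have "n^2 \<le> ((1+lam)/sqrt 2)^2" .
    moreover have "0 \<le> (1+lam)/sqrt 2" using assms by simp
    ultimately have "n \<le> (1+lam)/sqrt 2" by (rule power2_le_imp_le)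
    hence "g l \<le> ((1+lam)/sqrt 2) powr r" unfolding g_def normF n_def[symmetric] using r2
      by (intro powr_mono2) (auto simp: n_def)
    also have "\<dots> = B / sqrt 2 powr r" unfolding B_def using assms by (simp add: powr_divide)
    also have "\<dots> \<le> B / sqrt 2 powr 2"
      using Bpos r2 by (intro divide_left_mono powr_mono mult_pos_pos) auto
    also have "sqrt 2 powr 2 = 2" by (simp add: powr_numeral)
    finally show ?thesis .
  qed
  have "Re (sum F (K_set a)) \<le> cmod (sum F (K_set a))" by (rule complex_Re_le_cmod)
  also have "\<dots> \<le> sum (\<lambda>\<omega>. cmod (F \<omega>)) (K_set a)" by (rule norm_sum)
  also have "\<dots> \<le> sum g {-m..m}"
    unfolding K g_def using sum_image_le[of "{-m..m}" "\<lambda>\<omega>. cmod (F \<omega>)" "\<lambda>l. cis (th l)"]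
    by (simp add: o_def)
  also have "\<dots> \<le> 2 * m * B"
  proof -
    have S: "{-m..m} = insert (-m) (insert m {-m+1..m-1})" using m1 by auto
    have "sum g {-m..m} = g (-m) + g m + sum g {-m+1..m-1}"
      unfolding S using m1 by (simp add: add.assoc)
    also have "sum g {-m+1..m-1} \<le> sum (\<lambda>_. B) {-m+1..m-1}" by (rule sum_mono) (rule gB)
    also have "sum (\<lambda>_. B) {-m+1..m-1} = (2*m - 1) * B" using m1 by simp
    finally show ?thesis using gm[of m] gm[of "-m"] by (simp add: algebra_simps)
  qed
  also have "\<dots> \<le> a * B" using am1 Bpos by (intro mult_right_mono) auto
  finally show ?thesis using imz unfolding F_def B_def r_def by simp
qed

end
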